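(* Let $\mathcal S=(\{\lambda_r\}_{r\ge0},\{k_r\}_{r\ge1},\{C_{ij}^\ell\}_{i,j,\ell\in I})$ be a candidate spectrum satisfying (HB1)–(HB5), and satisfying (HB6) in the weak sense: whenever $i,j,i',j'\in I$ are such that both sides of (HB6) converge in $\overline{\mathbf R}+i\overline{\mathbf R}$, the two sides are equal in $\overline{\mathbf R}+i\overline{\mathbf R}$. Then for all $i,j\in I$ and all $N\ge0$, $$\sum_{\ell\in I}|\lambda_{\ell_1}|^N|C_{ij}^\ell|^2<\infty.$$
   Context: Candidate spectrum: reals $0=\lambda_0<\lambda_1\le\lambda_2\le\cdots\to\infty$, positive integers $k_1\le k_2\le\cdots\to\infty$, index set $I=\{(i_1,i_2)\in\mathbf Z^2: i_1>0\text{ or }(i_1,i_2)=(0,0)\text{ or }(i_1<0,\ |i_2|\ge k_{-i_1})\}$, and complex numbers $C_{ij}^\ell$ for $i,j,\ell\in I$. Conventions: $C_{ij}^\ell=0$ if some index is in $\mathbf Z^2\setminus I$; $\lambda_r=-k_{-r}(k_{-r}-1)$ for $r<0$; for $i=(i_1,i_2)$: $\bar i=(i_1,-i_2)$, $i^+=(i_1,i_2+1)$, $i^-=(i_1,i_2-1)$. (HB1) $C_{ij}^\ell=C_{ji}^\ell$; (HB2) $C_{ij}^\ell=0$ if $i_2+j_2\ne\ell_2$; (HB3) $\overline{C_{ij}^\ell}=C_{\bar i\bar j}^{\bar\ell}$; (HB4) for $i=(0,0)$, $C_{ij}^\ell=1$ if $j=\ell$ and $0$ otherwise; (HB5) $\sqrt{\lambda_{\ell_1}+\ell_2(\ell_2-1)}\,C_{ij}^{\ell^-}=\sqrt{\lambda_{i_1}+i_2(i_2+1)}\,C_{i^+j}^\ell+\sqrt{\lambda_{j_1}+j_2(j_2+1)}\,C_{ij^+}^\ell$;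 all for all $i,j,\ell\in I$. (HB6) is the equation $\sum_{\ell\in I}(-1)^{\ell_2}C_{ij}^\ell C_{i'j'}^{\bar\ell}=\sum_{\ell\in I}(-1)^{\ell_2}C_{ii'}^\ell C_{jj'}^{\bar\ell}$. An unordered sum $\sum x_k$ of reals converges in $\overline{\mathbf R}=[-\infty,\infty]$ if at least one of $\sum_{x_k>0}x_k$, $\sum_{x_k<0}x_k$ is finite; a sum $\sum z_k$ of complex numbers converges in $\overline{\mathbf R}+i\overline{\mathbf R}$ if both $\sum\operatorname{Re}z_k$ and $\sum\operatorname{Im}z_k$ converge in $\overline{\mathbf R}$, its value being then defined in $\overline{\mathbf R}+i\overline{\mathbf R}$. *)

theory Defs
  imports "HOL-Analysis.Analysis"
begin

type_synonym idx = "int \<times> int"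

text \<open>Index set I determined by the sequence k (k r is meaningful for r \<ge> 1).\<close>
definition idxI :: "(nat \<Rightarrow> nat) \<Rightarrow> idx set" where
  "idxI k = {(a, b). a > 0 \<or> (a, b) = (0, 0) \<or> (a < 0 \<and> \<bar>b\<bar> \<ge> int (k (nat (-a))))}"

definition lamZ :: "(nat \<Rightarrow> real) \<Rightarrow> (nat \<Rightarrow> nat) \<Rightarrow> int \<Rightarrow> real" where
  "lamZ lam k r = (if r \<ge> 0 then lam (nat r)
      else - real (k (nat (-r))) * (real (k (nat (-r))) - 1))"

definition ibar :: "idx \<Rightarrow> idx" where "ibar i = (fst i, - snd i)"
definition iplus :: "idx \<Rightarrow> idx" where "iplus i = (fst i, snd i + 1)"
definition iminus :: "idx \<Rightarrow> idx" where "iminus i = (fst i, snd i - 1)"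

definition candidate_spectrum :: "(nat \<Rightarrow> real) \<Rightarrow> (nat \<Rightarrow> nat) \<Rightarrow> (idx \<Rightarrow> idx \<Rightarrow> idx \<Rightarrow> complex) \<Rightarrow> bool" where
  "candidate_spectrum lam k C \<longleftrightarrow>
     lam 0 = 0 \<and> 0 < lam 1 \<and> mono lam \<and> filterlim lam at_top sequentially \<and>
     (\<forall>r\<ge>1. 0 < k r) \<and> (\<forall>r s. 1 \<le> r \<longrightarrow> r \<le> s \<longrightarrow> k r \<le> k s) \<and>
     filterlim k at_top sequentially \<and>
     (\<forall>i j l. i \<notin> idxI k \<or> j \<notin> idxI k \<or> l \<notin> idxI k \<longrightarrow> C i j l = 0)"

definition HB1 :: "(nat \<Rightarrow> nat) \<Rightarrow> (idx \<Rightarrow> idx \<Rightarrow> idx \<Rightarrow> complex) \<Rightarrow> bool" where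
  "HB1 k C \<longleftrightarrow> (\<forall>i\<in>idxI k. \<forall>j\<in>idxI k. \<forall>l\<in>idxI k. C i j l = C j i l)"

definition HB2 :: "(nat \<Rightarrow> nat) \<Rightarrow> (idx \<Rightarrow> idx \<Rightarrow> idx \<Rightarrow> complex) \<Rightarrow> bool" where
  "HB2 k C \<longleftrightarrow> (\<forall>i\<in>idxI k. \<forall>j\<in>idxI k. \<forall>l\<in>idxI k.
      snd i + snd j \<noteq> snd l \<longrightarrow> C i j l = 0)"

definition HB3 :: "(nat \<Rightarrow> nat) \<Rightarrow> (idx \<Rightarrow> idx \<Rightarrow> idx \<Rightarrow> complex) \<Rightarrow> bool" where
  "HB3 k C \<longleftrightarrow> (\<forall>i\<in>idxI k. \<forall>j\<in>idxI k. \<forall>l\<in>idxI k.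
      cnj (C i j l) = C (ibar i) (ibar j) (ibar l))"

definition HB4 :: "(nat \<Rightarrow> nat) \<Rightarrow> (idx \<Rightarrow> idx \<Rightarrow> idx \<Rightarrow> complex) \<Rightarrow> bool" where
  "HB4 k C \<longleftrightarrow> (\<forall>j\<in>idxI k. \<forall>l\<in>idxI k. C (0, 0) j l = (if j = l then 1 else 0))"

definition HB5 :: "(nat \<Rightarrow> real) \<Rightarrow> (nat \<Rightarrow> nat) \<Rightarrow> (idx \<Rightarrow> idx \<Rightarrow> idx \<Rightarrow> complex) \<Rightarrow> bool" where
  "HB5 lam k C \<longleftrightarrow> (\<forall>i\<in>idxI k. \<forall>j\<in>idxI k. \<forall>l\<in>idxI k.
      complex_of_real (sqrt (lamZ lam k (fst l) + real_of_int (snd l * (snd l - 1)))) * C i j (iminus l)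
    = complex_of_real (sqrt (lamZ lam k (fst i) + real_of_int (snd i * (snd i + 1)))) * C (iplus i) j l
    + complex_of_real (sqrt (lamZ lam k (fst j) + real_of_int (snd j * (snd j + 1)))) * C i (iplus j) l)"

text \<open>Unordered sums of reals in the extended reals: positive and negative parts
  (as sums in [0,\<infinity>]); the sum converges in [-\<infinity>,\<infinity>] if at least one part is finite,
  and its value is then the difference.\<close>
definition pos_part_sum :: "('a \<Rightarrow> real) \<Rightarrow> 'a set \<Rightarrow> ennreal" where
  "pos_part_sum x A = (\<integral>\<^sup>+ a. ennreal (max 0 (x a)) \<partial>count_space A)"

definition neg_part_sum :: "('a \<Rightarrow> real) \<Rightarrow> 'a set \<Rightarrow> ennreal" where
  "neg_part_sum x A = (\<integral>\<^sup>+ a. ennreal (max 0 (- x a)) \<partial>count_space A)"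

definition ereal_sum_converges :: "('a \<Rightarrow> real) \<Rightarrow> 'a set \<Rightarrow> bool" where
  "ereal_sum_converges x A \<longleftrightarrow> pos_part_sum x A < \<infinity> \<or> neg_part_sum x A < \<infinity>"

definition ereal_sum_value :: "('a \<Rightarrow> real) \<Rightarrow> 'a set \<Rightarrow> ereal" where
  "ereal_sum_value x A = enn2ereal (pos_part_sum x A) - enn2ereal (neg_part_sum x A)"

text \<open>Complex sums converge in R-bar + i R-bar iff real and imaginary parts both converge.\<close>
definition csum_converges :: "('a \<Rightarrow> complex) \<Rightarrow> 'a set \<Rightarrow> bool" where
  "csum_converges z A \<longleftrightarrow> ereal_sum_converges (\<lambda>a. Re (z a)) A \<and> ereal_sum_converges (\<lambda>a. Im (z a)) A"

definition csum_value :: "('a \<Rightarrow> complex) \<Rightarrow> 'a set \<Rightarrow> ereal \<times> ereal" where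
  "csum_value z A = (ereal_sum_value (\<lambda>a. Re (z a)) A, ereal_sum_value (\<lambda>a. Im (z a)) A)"

definition HB6_weak :: "(nat \<Rightarrow> nat) \<Rightarrow> (idx \<Rightarrow> idx \<Rightarrow> idx \<Rightarrow> complex) \<Rightarrow> bool" where
  "HB6_weak k C \<longleftrightarrow> (\<forall>i\<in>idxI k. \<forall>j\<in>idxI k. \<forall>i'\<in>idxI k. \<forall>j'\<in>idxI k.
     (let L = (\<lambda>l. (-1) ^ nat \<bar>snd l\<bar> * C i j l * C i' j' (ibar l));
          R = (\<lambda>l. (-1) ^ nat \<bar>snd l\<bar> * C i i' l * C j j' (ibar l))
      in csum_converges L (idxI k) \<and> csum_converges R (idxI k) \<longrightarrow>
         csum_value L (idxI k) = csum_value R (idxI k)))"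

end

theory Submission
  imports Defs
begin
lemma nn_fin_summable:
  fixes f :: "'a \<Rightarrow> real"
  assumes "\<And>x. x \<in> A \<Longrightarrow> f x \<ge> 0" "(\<integral>\<^sup>+x. ennreal (f x) \<partial>count_space A) < \<infinity>"
  shows "f summable_on A"
proof -
  have "integrable (count_space A) f"
    unfolding integrable_iff_bounded
  proof
    show "f \<in> borel_measurable (count_space A)" by simp
    have "(\<integral>\<^sup>+x. ennreal (norm (f x)) \<partial>count_space A) = (\<integral>\<^sup>+x. ennreal (f x) \<partial>count_space A)"
      by (rule nn_integral_cong) (use assms(1) in auto)
    then show "(\<integral>\<^sup>+x. ennreal (norm (f x)) \<partial>count_space A) < \<infinity>" using assms(2) by simp
  qed
  then have "Infinite_Set_Sum.abs_summable_on f A"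
    unfolding Infinite_Set_Sum.abs_summable_on_def .
  then have "(\<lambda>x. norm (f x)) summable_on A"
    by (rule abs_summable_equivalent[THEN iffD2])
  then show ?thesis by (rule summable_on_iff_abs_summable_on_real[THEN iffD2])
qed

lemma ncs_ind: "(\<integral>\<^sup>+x. f x \<partial>count_space X) = (\<integral>\<^sup>+x. f x * indicator X x \<partial>count_space UNIV)"
  by (simp add: nn_integral_restrict_space[symmetric] restrict_count_space)

lemma nn_le_support:
  assumes "\<And>x. x \<in> A \<Longrightarrow> x \<notin> B \<Longrightarrow> f x = 0"
  shows "(\<integral>\<^sup>+x. f x \<partial>count_space A) \<le> (\<integral>\<^sup>+x. f x \<partial>count_space B)"
  unfolding ncs_ind[where f=f and X=A] ncs_ind[where f=f and X=B]
  by (rule nn_integral_mono) (auto simp: indicator_def assms)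

lemma nn_eq_support:
  assumes "B \<subseteq> A" "\<And>x. x \<in> A \<Longrightarrow> x \<notin> B \<Longrightarrow> f x = 0"
  shows "(\<integral>\<^sup>+x. f x \<partial>count_space A) = (\<integral>\<^sup>+x. f x \<partial>count_space B)"
  unfolding ncs_ind[where f=f and X=A] ncs_ind[where f=f and X=B]
  by (rule nn_integral_cong) (use assms in \<open>auto simp: indicator_def\<close>)

lemma nn_reindex:
  assumes "inj_on g A"
  shows "(\<integral>\<^sup>+x. f x \<partial>count_space (g ` A)) = (\<integral>\<^sup>+x. f (g x) \<partial>count_space A)"
  using nn_integral_bij_count_space[of g A "g ` A" f] assms
  by (simp add: bij_betw_def)

lemma nn_mono_on:
  assumes "\<And>x. x \<in> A \<Longrightarrow> f x \<le> g x"
  shows "(\<integral>\<^sup>+x. f x \<partial>count_space A) \<le> (\<integral>\<^sup>+x. g x \<partial>count_space A)"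
  by (rule nn_integral_mono) (use assms in auto)

lemma nn_split_fin:
  assumes "finite F" "(\<integral>\<^sup>+x. f x \<partial>count_space (A - F)) < \<infinity>" "\<And>x. f x < \<infinity>"
  shows "(\<integral>\<^sup>+x. f x \<partial>count_space A) < \<infinity>"
proof -
  have "(\<integral>\<^sup>+x. f x \<partial>count_space A) \<le> (\<integral>\<^sup>+x. f x * indicator (A-F) x + f x * indicator (A \<inter> F) x \<partial>count_space UNIV)"
    unfolding ncs_ind[where f=f and X=A] by (rule nn_integral_mono) (auto simp: indicator_def)
  also have "\<dots> = (\<integral>\<^sup>+x. f x \<partial>count_space (A-F)) + (\<integral>\<^sup>+x. f x \<partial>count_space (A \<inter> F))"
    unfolding ncs_ind[where f=f and X="A-F"] ncs_ind[where f=f and X="A \<inter> F"]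
    by (rule nn_integral_add) auto
  also have "(\<integral>\<^sup>+x. f x \<partial>count_space (A \<inter> F)) = (\<Sum>x\<in>A \<inter> F. f x)"
    using assms(1) by (simp add: nn_integral_count_space_finite)
  also have "(\<Sum>x\<in>A \<inter> F. f x) < \<infinity>"
    using assms(1,3) by (simp add: less_top[symmetric])
  finally show ?thesis using assms(2) by (simp add: less_top)
qed

locale HBctx =
  fixes lam :: "nat \<Rightarrow> real" and k :: "nat \<Rightarrow> nat"
    and C :: "int \<times> int \<Rightarrow> int \<times> int \<Rightarrow> int \<times> int \<Rightarrow> complex"
  assumes cs: "candidate_spectrum lam k C"
    and h1: "HB1 k C" and h2: "HB2 k C" and h3: "HB3 k C" and h4: "HB4 k C" and h5: "HB5 lam k C"
    and h6: "HB6_weak k C"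
begin

abbreviation "I \<equiv> idxI k"

lemma C_out: "i \<notin> I \<or> j \<notin> I \<or> l \<notin> I \<Longrightarrow> C i j l = 0"
  using cs unfolding candidate_spectrum_def by blast

lemma HB1': "i \<in> I \<Longrightarrow> j \<in> I \<Longrightarrow> C i j l = C j i l"
  using h1 C_out unfolding HB1_def by metis

lemma HB2': "i \<in> I \<Longrightarrow> j \<in> I \<Longrightarrow> snd i + snd j \<noteq> snd l \<Longrightarrow> C i j l = 0"
  using h2 C_out unfolding HB2_def by metis

lemma ibar_I: "x \<in> I \<Longrightarrow> ibar x \<in> I"
  by (auto simp: idxI_def ibar_def)

lemma ibar_ibar[simp]: "ibar (ibar x) = x"
  by (simp add: ibar_def)

lemma ibar_I_iff: "ibar x \<in> I \<longleftrightarrow> x \<in> I"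
  using ibar_I ibar_ibar by metis

lemma HB3': "i \<in> I \<Longrightarrow> j \<in> I \<Longrightarrow> l \<in> I \<Longrightarrow> cnj (C i j l) = C (ibar i) (ibar j) (ibar l)"
  using h3 unfolding HB3_def by blast

lemma HB4': "j \<in> I \<Longrightarrow> l \<in> I \<Longrightarrow> C (0,0) j l = (if j = l then 1 else 0)"
  using h4 unfolding HB4_def by blast

lemma HB5': "i \<in> I \<Longrightarrow> j \<in> I \<Longrightarrow> l \<in> I \<Longrightarrow>
      complex_of_real (sqrt (lamZ lam k (fst l) + real_of_int (snd l * (snd l - 1)))) * C i j (iminus l)
    = complex_of_real (sqrt (lamZ lam k (fst i) + real_of_int (snd i * (snd i + 1)))) * C (iplus i) j l
    + complex_of_real (sqrt (lamZ lam k (fst j) + real_of_int (snd j * (snd j + 1)))) * C i (iplus j) l"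
  using h5 unfolding HB5_def by blast

lemma lam_pos: "1 \<le> t \<Longrightarrow> 0 < lam t"
  using cs unfolding candidate_spectrum_def mono_def by (meson less_le_trans)

lemma lam_nonneg: "0 \<le> lam t"
proof (cases "t = 0")
  case True
  then show ?thesis using cs unfolding candidate_spectrum_def by simp
next
  case False
  then have "1 \<le> t" by simp
  then show ?thesis using lam_pos less_imp_le by blast
qed

lemma k_pos: "1 \<le> r \<Longrightarrow> 0 < k r"
  using cs unfolding candidate_spectrum_def by blast

lemma lamZ_nat[simp]: "lamZ lam k (int t) = lam t"
  by (simp add: lamZ_def)

lemma mem_pos: "1 \<le> t \<Longrightarrow> (int t, w) \<in> I"
  by (simp add: idxI_def)

lemma mem_00: "(0,0) \<in> I"
  by (simp add: idxI_def)

lemma mem_t0: "(int t, 0) \<in> I"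
  by (cases "t = 0") (simp_all add: idxI_def)

lemma snd0: "l \<in> I \<Longrightarrow> snd l = 0 \<Longrightarrow> fst l \<ge> 0"
proof (rule ccontr)
  assume l: "l \<in> I" "snd l = 0" "\<not> fst l \<ge> 0"
  then have "1 \<le> nat (- fst l)" by simp
  from k_pos[OF this] l show False by (cases l) (auto simp: idxI_def)
qed

definition A :: "int \<times> int \<Rightarrow> nat \<Rightarrow> real" where
  "A i t = Re (C i (ibar i) (int t, 0))"

lemma A_real: "C i (ibar i) (int t, 0) = complex_of_real (A i t)"
proof (cases "i \<in> I")
  case True
  have "cnj (C i (ibar i) (int t, 0)) = C (ibar i) i (int t, 0)"
    using HB3'[OF True ibar_I[OF True] mem_t0] by (simp add: ibar_def)
  also have "\<dots> = C i (ibar i) (int t, 0)"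
    using HB1'[OF ibar_I[OF True] True] .
  finally have eq: "cnj (C i (ibar i) (int t, 0)) = C i (ibar i) (int t, 0)" .
  have "Im (C i (ibar i) (int t, 0)) = 0"
    using arg_cong[OF eq, of Im] by simp
  then show ?thesis unfolding A_def by (simp add: complex_eq_iff)
next
  case False
  then show ?thesis by (simp add: A_def C_out)
qed

lemma A_out: "i \<notin> I \<Longrightarrow> A i t = 0"
  by (simp add: A_def C_out)

lemma A_bar: "A (ibar i) t = A i t"
proof (cases "i \<in> I")
  case True
  then show ?thesis unfolding A_def using HB1'[OF True ibar_I[OF True]] by simp
next
  case False
  then show ?thesis by (simp add: A_out ibar_I_iff)
qed


definition alpha :: "int \<times> int \<Rightarrow> real" where
  "alpha j = sqrt (lamZ lam k (fst j) + real_of_int (snd j * (snd j + 1)))"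

lemma X_lemma:
  assumes j: "j \<in> I" and jp: "iplus j \<in> I" and t: "1 \<le> t"
  shows "complex_of_real (sqrt (lam t)) * C (iplus j) (ibar j) (int t, 1)
     = complex_of_real (alpha j * (A j t + A (iplus j) t))"
proof -
  define x where "x = ibar (iplus j)"
  have x: "x \<in> I" using jp by (simp add: x_def ibar_I)
  note e5 = HB5'[OF x j mem_t0[of t]]
  have fx: "fst x = fst j" and sx: "snd x * (snd x + 1) = snd j * (snd j + 1)"
    by (auto simp: x_def ibar_def iplus_def algebra_simps)
  have ipx: "iplus x = ibar j" by (simp add: x_def ibar_def iplus_def)
  have c1: "C (ibar j) j (int t, 0) = complex_of_real (A j t)"
    using HB1'[OF ibar_I[OF j] j] A_real by simp
  have c2: "C x (iplus j) (int t, 0) = complex_of_real (A (iplus j) t)"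
    using HB1'[OF x jp] A_real by (simp add: x_def)
  have e: "complex_of_real (sqrt (lam t)) * C x j (int t, -1)
      = complex_of_real (alpha j * (A j t + A (iplus j) t))"
    using e5 unfolding fx sx ipx c1 c2 by (simp add: iminus_def alpha_def algebra_simps)
  have "cnj (C x j (int t, -1)) = C (iplus j) (ibar j) (int t, 1)"
    using HB3'[OF x j mem_pos[OF t]] by (simp add: x_def ibar_def)
  then show ?thesis using arg_cong[OF e, of cnj] by simp
qed

lemma recursion:
  assumes i: "i \<in> I" and ip: "iplus i \<in> I" and t: "1 \<le> t"
  shows "lam t * A i t = alpha i * alpha i * (A i t + A (iplus i) t)
      + (if iminus i \<in> I then alpha (iminus i) * alpha (iminus i) * (A (iminus i) t + A i t) else 0)"
proof -
  note e5 = HB5'[OF i ibar_I[OF i] mem_pos[OF t, of 1]]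
  have a1: "sqrt (lamZ lam k (fst (ibar i)) + real_of_int (snd (ibar i) * (snd (ibar i) + 1))) = alpha (iminus i)"
    by (simp add: alpha_def ibar_def iminus_def algebra_simps)
  have e: "complex_of_real (sqrt (lam t)) * complex_of_real (A i t)
      = complex_of_real (alpha i) * C (iplus i) (ibar i) (int t, 1)
      + complex_of_real (alpha (iminus i)) * C i (iplus (ibar i)) (int t, 1)"
    using e5 unfolding a1 by (simp add: iminus_def alpha_def A_real)
  have sq: "sqrt (lam t) * sqrt (lam t) = lam t" using lam_nonneg by simp
  note X1 = X_lemma[OF i ip t]
  have "complex_of_real (lam t * A i t) = complex_of_real (sqrt (lam t)) * (complex_of_real (sqrt (lam t)) * complex_of_real (A i t))"
    using sq by (simp flip: of_real_mult)
  also have "\<dots> = complex_of_real (alpha i) * (complex_of_real (sqrt (lam t)) * C (iplus i) (ibar i) (int t, 1))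
      + complex_of_real (alpha (iminus i)) * (complex_of_real (sqrt (lam t)) * C i (iplus (ibar i)) (int t, 1))"
    unfolding e by (simp add: algebra_simps)
  also have "complex_of_real (sqrt (lam t)) * C (iplus i) (ibar i) (int t, 1) = complex_of_real (alpha i * (A i t + A (iplus i) t))"
    using X1 .
  also have "complex_of_real (sqrt (lam t)) * C i (iplus (ibar i)) (int t, 1)
     = (if iminus i \<in> I then complex_of_real (alpha (iminus i) * (A (iminus i) t + A i t)) else 0)"
  proof (cases "iminus i \<in> I")
    case True
    have "iplus (ibar i) = ibar (iminus i)" "i = iplus (iminus i)"
      by (auto simp: ibar_def iplus_def iminus_def)
    then show ?thesis using X_lemma[OF True _ t] i True by simp
  next
    case False
    have "iplus (ibar i) = ibar (iminus i)" by (auto simp: ibar_def iplus_def iminus_def)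
    then show ?thesis using False C_out ibar_I_iff by simp
  qed
  finally show ?thesis
    by (cases "iminus i \<in> I") (simp_all add: algebra_simps flip: of_real_mult of_real_add)
qed


lemma supp0:
  assumes "\<And>l. l \<in> I \<Longrightarrow> snd l \<noteq> 0 \<Longrightarrow> f l = 0"
  shows "(\<integral>\<^sup>+l. f l \<partial>count_space I) = (\<integral>\<^sup>+t. f (int t, 0) \<partial>count_space UNIV)"
proof -
  let ?g = "\<lambda>t::nat. (int t, 0::int)"
  have "(\<integral>\<^sup>+l. f l \<partial>count_space I) = (\<integral>\<^sup>+l. f l \<partial>count_space (range ?g))"
  proof (rule nn_eq_support)
    show "range ?g \<subseteq> I" using mem_t0 by auto
    fix l assume l: "l \<in> I" "l \<notin> range ?g"
    show "f l = 0"
    proof (rule assms[OF l(1)])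
      show "snd l \<noteq> 0"
      proof
        assume s: "snd l = 0"
        then have "fst l \<ge> 0" using snd0 l(1) by blast
        then have "l = ?g (nat (fst l))" using s by (cases l) auto
        then show False using l(2) by blast
      qed
    qed
  qed
  also have "\<dots> = (\<integral>\<^sup>+t. f (?g t) \<partial>count_space UNIV)"
    by (rule nn_reindex) (simp add: inj_on_def)
  finally show ?thesis .
qed

lemma pos_part_zero: "(\<And>a. a \<in> XX \<Longrightarrow> x a \<le> 0) \<Longrightarrow> pos_part_sum x XX = 0"
proof -
  assume a: "\<And>a. a \<in> XX \<Longrightarrow> x a \<le> 0"
  have "(\<integral>\<^sup>+a. ennreal (max 0 (x a)) \<partial>count_space XX) = (\<integral>\<^sup>+a. 0 \<partial>count_space XX)"
    by (rule nn_integral_cong) (simp add: a max_absorb1)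
  then show ?thesis unfolding pos_part_sum_def by simp
qed

lemma neg_part_zero: "(\<And>a. a \<in> XX \<Longrightarrow> x a \<ge> 0) \<Longrightarrow> neg_part_sum x XX = 0"
proof -
  assume a: "\<And>a. a \<in> XX \<Longrightarrow> x a \<ge> 0"
  have "(\<integral>\<^sup>+a. ennreal (max 0 (- x a)) \<partial>count_space XX) = (\<integral>\<^sup>+a. 0 \<partial>count_space XX)"
    by (rule nn_integral_cong) (simp add: a max_absorb1)
  then show ?thesis unfolding neg_part_sum_def by simp
qed

lemma odd_abs_nat: "odd (nat \<bar>2 * s + 1\<bar>)" for s :: int
  by (simp add: even_nat_iff)

lemma bridge:
  assumes i: "i \<in> I" and ip: "iplus i \<in> I"
    and negf: "(\<integral>\<^sup>+t. ennreal (max 0 (- (A i t * A (iplus i) t))) \<partial>count_space UNIV) < \<infinity>"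
  shows "(\<integral>\<^sup>+t. ennreal (max 0 (A i t * A (iplus i) t)) \<partial>count_space UNIV) < \<infinity>"
proof (rule ccontr)
  assume posinf: "\<not> ?thesis"
  define L where "L = (\<lambda>l. (-1::complex) ^ nat \<bar>snd l\<bar> * C i (ibar i) l * C (iplus i) (ibar (iplus i)) (ibar l))"
  define R where "R = (\<lambda>l. (-1::complex) ^ nat \<bar>snd l\<bar> * C i (iplus i) l * C (ibar i) (ibar (iplus i)) (ibar l))"
  have imp: "csum_converges L I \<Longrightarrow> csum_converges R I \<Longrightarrow> csum_value L I = csum_value R I"
    using h6[unfolded HB6_weak_def Let_def, rule_format, OF i ibar_I[OF i] ip ibar_I[OF ip]]
    unfolding L_def R_def by blast
  have L_sup: "L l = 0" if "l \<in> I" "snd l \<noteq> 0" for l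
    using HB2'[OF i ibar_I[OF i], of l] that by (simp add: L_def ibar_def)
  have L_on: "L (int t, 0) = complex_of_real (A i t * A (iplus i) t)" for t
    by (simp add: L_def ibar_def A_real[unfolded ibar_def])
  have R_vals: "Re (R l) \<le> 0 \<and> Im (R l) = 0" if l: "l \<in> I" for l
  proof -
    have c3: "C (ibar i) (ibar (iplus i)) (ibar l) = cnj (C i (iplus i) l)"
      using HB3'[OF i ip l] by simp
    show ?thesis
    proof (cases "C i (iplus i) l = 0")
      case True
      then show ?thesis by (simp add: R_def)
    next
      case False
      then have "snd l = 2 * snd i + 1"
        using HB2'[OF i ip, of l] by (simp add: iplus_def) (metis mult_2 add.assoc)
      then have sg: "(-1::complex) ^ nat \<bar>snd l\<bar> = -1"
        using odd_abs_nat[of "snd i"] by simp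
      have "R l = - complex_of_real ((cmod (C i (iplus i) l))\<^sup>2)"
        unfolding R_def sg c3 by (simp add: mult.assoc) (metis complex_norm_square of_real_power)
      then show ?thesis by simp
    qed
  qed
  have ReL_pos: "pos_part_sum (\<lambda>l. Re (L l)) I = (\<integral>\<^sup>+t. ennreal (max 0 (A i t * A (iplus i) t)) \<partial>count_space UNIV)"
    unfolding pos_part_sum_def by (subst supp0) (auto simp: L_sup L_on)
  have ReL_neg: "neg_part_sum (\<lambda>l. Re (L l)) I = (\<integral>\<^sup>+t. ennreal (max 0 (- (A i t * A (iplus i) t))) \<partial>count_space UNIV)"
    unfolding neg_part_sum_def by (subst supp0) (auto simp: L_sup L_on)
  have ImL: "Im (L l) = 0" if "l \<in> I" for l
  proof (cases "snd l = 0")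
    case True
    then have "l = (int (nat (fst l)), 0)" using snd0[OF that] by (cases l) auto
    then show ?thesis using L_on by (metis Im_complex_of_real)
  next
    case False
    then show ?thesis using L_sup[OF that] by simp
  qed
  have p1: "pos_part_sum (\<lambda>l. Re (R l)) I = 0"
    by (rule pos_part_zero) (use R_vals in blast)
  have p2: "pos_part_sum (\<lambda>l. Im (R l)) I = 0"
    by (rule pos_part_zero) (use R_vals in simp)
  have p3: "pos_part_sum (\<lambda>l. Im (L l)) I = 0"
    by (rule pos_part_zero) (use ImL in simp)
  have cL: "csum_converges L I"
    unfolding csum_converges_def ereal_sum_converges_def p3
    using negf ReL_neg by simp
  have cR: "csum_converges R I"
    unfolding csum_converges_def ereal_sum_converges_def p1 p2 by simp
  have eq: "ereal_sum_value (\<lambda>l. Re (L l)) I = ereal_sum_value (\<lambda>l. Re (R l)) I"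
    using arg_cong[OF imp[OF cL cR], of fst] unfolding csum_value_def by (simp only: fst_conv)
  have "ereal_sum_value (\<lambda>l. Re (L l)) I = \<infinity>"
  proof -
    have "pos_part_sum (\<lambda>l. Re (L l)) I = \<infinity>" using posinf ReL_pos by (simp add: not_less top_unique)
    moreover have "neg_part_sum (\<lambda>l. Re (L l)) I \<noteq> \<infinity>" using negf ReL_neg by simp
    ultimately show ?thesis unfolding ereal_sum_value_def
      by (cases "neg_part_sum (\<lambda>l. Re (L l)) I" rule: ennreal_cases) (simp_all add: enn2ereal_ennreal)
  qed
  moreover have "ereal_sum_value (\<lambda>l. Re (R l)) I \<le> 0"
    unfolding ereal_sum_value_def
    using p1 enn2ereal_nonneg[of "neg_part_sum (\<lambda>l. Re (R l)) I"]
    by (cases "enn2ereal (neg_part_sum (\<lambda>l. Re (R l)) I)") (auto simp: zero_ennreal.rep_eq)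
  ultimately show False using eq by simp
qed

end

lemma abs_key:
  fixes x y h lam :: "nat \<Rightarrow> real"
  assumes lim: "filterlim lam at_top sequentially"
    and c: "c > 0" and hnn: "\<And>t. h t \<ge> 0"
    and hfin: "(\<integral>\<^sup>+t. ennreal (h t) \<partial>count_space UNIV) < \<infinity>"
    and ineq: "\<And>t. 1 \<le> t \<Longrightarrow> (lam t - K) * (x t)\<^sup>2 - h t \<le> c * (x t * y t)"
    and hb6: "(\<integral>\<^sup>+t. ennreal (max 0 (- (x t * y t))) \<partial>count_space UNIV) < \<infinity> \<Longrightarrow>
              (\<integral>\<^sup>+t. ennreal (max 0 (x t * y t)) \<partial>count_space UNIV) < \<infinity>"
  shows "(\<integral>\<^sup>+t. ennreal ((x t)\<^sup>2) \<partial>count_space UNIV) < \<infinity>"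
proof -
  from lim have "eventually (\<lambda>t. K + 1 \<le> lam t) sequentially"
    by (simp add: filterlim_at_top)
  then obtain T where T: "\<And>t. t \<ge> T \<Longrightarrow> K + 1 \<le> lam t"
    by (auto simp: eventually_sequentially)
  define T' where "T' = max T 1"
  have hc: "(\<integral>\<^sup>+t. ennreal (h t / c) \<partial>count_space UNIV) < \<infinity>"
  proof -
    have "(\<integral>\<^sup>+t. ennreal (h t / c) \<partial>count_space UNIV)
        = (\<integral>\<^sup>+t. ennreal (1 / c) * ennreal (h t) \<partial>count_space UNIV)"
      by (rule nn_integral_cong) (use c hnn in \<open>simp add: ennreal_mult[symmetric]\<close>)
    also have "\<dots> = ennreal (1 / c) * (\<integral>\<^sup>+t. ennreal (h t) \<partial>count_space UNIV)"
      by (rule nn_integral_cmult) simp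
    also have "\<dots> < \<infinity>" using hfin by (simp add: ennreal_mult_less_top)
    finally show ?thesis .
  qed
  have neg: "(\<integral>\<^sup>+t. ennreal (max 0 (- (x t * y t))) \<partial>count_space UNIV) < \<infinity>"
  proof (rule nn_split_fin[where F="{..<T'}"])
    show "finite {..<T'}" by simp
    show "\<And>t. ennreal (max 0 (- (x t * y t))) < \<infinity>" by simp
    have "(\<integral>\<^sup>+t. ennreal (max 0 (- (x t * y t))) \<partial>count_space (UNIV - {..<T'}))
        \<le> (\<integral>\<^sup>+t. ennreal (h t / c) \<partial>count_space (UNIV - {..<T'}))"
    proof (rule nn_mono_on)
      fix t assume "t \<in> UNIV - {..<T'}"
      then have t1: "1 \<le> t" and tT: "T \<le> t" by (auto simp: T'_def)
      have "0 \<le> (lam t - K) * (x t)\<^sup>2" using T[OF tT] by simp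
      then have "- h t \<le> c * (x t * y t)" using ineq[OF t1] by linarith
      then have "- (x t * y t) \<le> h t / c" using c by (simp add: field_simps)
      then show "ennreal (max 0 (- (x t * y t))) \<le> ennreal (h t / c)"
        using hnn[of t] c by (intro ennreal_leI) simp
    qed
    also have "\<dots> \<le> (\<integral>\<^sup>+t. ennreal (h t / c) \<partial>count_space UNIV)"
      by (rule nn_le_support) simp
    finally show "(\<integral>\<^sup>+t. ennreal (max 0 (- (x t * y t))) \<partial>count_space (UNIV - {..<T'})) < \<infinity>"
      using hc by (rule le_less_trans)
  qed
  have pos: "(\<integral>\<^sup>+t. ennreal (max 0 (x t * y t)) \<partial>count_space UNIV) < \<infinity>"
    by (rule hb6[OF neg])
  show ?thesis
  proof (rule nn_split_fin[where F="{..<T'}"])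
    show "finite {..<T'}" by simp
    show "\<And>t. ennreal ((x t)\<^sup>2) < \<infinity>" by simp
    have "(\<integral>\<^sup>+t. ennreal ((x t)\<^sup>2) \<partial>count_space (UNIV - {..<T'}))
        \<le> (\<integral>\<^sup>+t. ennreal c * ennreal (max 0 (x t * y t)) + ennreal (h t) \<partial>count_space (UNIV - {..<T'}))"
    proof (rule nn_mono_on)
      fix t assume "t \<in> UNIV - {..<T'}"
      then have t1: "1 \<le> t" and tT: "T \<le> t" by (auto simp: T'_def)
      have "1 * (x t)\<^sup>2 \<le> (lam t - K) * (x t)\<^sup>2"
        by (rule mult_right_mono) (use T[OF tT] in auto)
      also have "\<dots> \<le> c * (x t * y t) + h t" using ineq[OF t1] by linarith
      also have "\<dots> \<le> c * max 0 (x t * y t) + h t" using c by (simp add: mult_left_mono)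
      finally have "(x t)\<^sup>2 \<le> c * max 0 (x t * y t) + h t" by simp
      then have "ennreal ((x t)\<^sup>2) \<le> ennreal (c * max 0 (x t * y t) + h t)"
        by (rule ennreal_leI)
      also have "\<dots> = ennreal c * ennreal (max 0 (x t * y t)) + ennreal (h t)"
        using c hnn[of t] by (simp add: ennreal_plus ennreal_mult)
      finally show "ennreal ((x t)\<^sup>2) \<le> ennreal c * ennreal (max 0 (x t * y t)) + ennreal (h t)" .
    qed
    also have "\<dots> \<le> (\<integral>\<^sup>+t. ennreal c * ennreal (max 0 (x t * y t)) + ennreal (h t) \<partial>count_space UNIV)"
      by (rule nn_le_support) simp
    also have "\<dots> = ennreal c * (\<integral>\<^sup>+t. ennreal (max 0 (x t * y t)) \<partial>count_space UNIV)
        + (\<integral>\<^sup>+t. ennreal (h t) \<partial>count_space UNIV)"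
      by (simp add: nn_integral_add nn_integral_cmult)
    also have "\<dots> < \<infinity>" using pos hfin by (simp add: ennreal_mult_less_top)
    finally show "(\<integral>\<^sup>+t. ennreal ((x t)\<^sup>2) \<partial>count_space (UNIV - {..<T'})) < \<infinity>" .
  qed
qed


context HBctx begin

definition Qf :: "int \<times> int \<Rightarrow> bool" where
  "Qf i \<longleftrightarrow> (\<integral>\<^sup>+t. ennreal ((A i t)\<^sup>2) \<partial>count_space UNIV) < \<infinity>"

lemma lim_lam: "filterlim lam at_top sequentially"
  using cs unfolding candidate_spectrum_def by blast

lemma Qf_out: "i \<notin> I \<Longrightarrow> Qf i"
  by (simp add: Qf_def A_out)

lemma alpha_pos_arg:
  assumes i: "i \<in> I" and s: "snd i \<ge> 0" and n0: "i \<noteq> (0,0)"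
  shows "lamZ lam k (fst i) + real_of_int (snd i * (snd i + 1)) > 0"
proof (cases "fst i > 0")
  case True
  then have "lamZ lam k (fst i) = lam (nat (fst i))" by (simp add: lamZ_def)
  moreover have "lam (nat (fst i)) > 0" using True by (intro lam_pos) simp
  moreover have "real_of_int (snd i * (snd i + 1)) \<ge> 0" using s by simp
  ultimately show ?thesis by linarith
next
  case False
  show ?thesis
  proof (cases "fst i = 0")
    case True
    then have "i = (0,0)" using i by (cases i) (auto simp: idxI_def)
    then show ?thesis using n0 by simp
  next
    case False2: False
    with False have neg: "fst i < 0" by simp
    define kk where "kk = k (nat (- fst i))"
    have "1 \<le> nat (- fst i)" using neg by simp
    then have kk1: "kk \<ge> 1" using k_pos[of "nat (- fst i)"] by (simp add: kk_def)
    have "\<bar>snd i\<bar> \<ge> int kk" using i neg by (cases i) (auto simp: idxI_def kk_def)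
    then have ge: "snd i \<ge> int kk" using s by simp
    have lz: "lamZ lam k (fst i) = - real kk * (real kk - 1)"
      using neg by (simp add: lamZ_def kk_def)
    have "real_of_int (snd i * (snd i + 1)) \<ge> real kk * (real kk + 1)"
    proof -
      have "real_of_int (snd i) \<ge> real kk" using ge by linarith
      then have "real_of_int (snd i) * (real_of_int (snd i) + 1) \<ge> real kk * (real kk + 1)"
        by (intro mult_mono) auto
      then show ?thesis by simp
    qed
    then show ?thesis unfolding lz using kk1 by (simp add: algebra_simps)
  qed
qed

lemma alpha_ne0:
  assumes "i \<in> I" "snd i \<ge> 0" "i \<noteq> (0,0)"
  shows "alpha i \<noteq> 0"
  using alpha_pos_arg[OF assms] by (simp add: alpha_def)

lemma iplus_I:
  assumes i: "i \<in> I" and s: "snd i \<ge> 0" and n0: "i \<noteq> (0,0)"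
  shows "iplus i \<in> I"
  using assms by (cases i) (auto simp: idxI_def iplus_def)

lemma Q_general:
  assumes i: "i \<in> I" and s: "snd i \<ge> 0" and n0: "i \<noteq> (0,0)" and qm: "Qf (iminus i)"
  shows "Qf i"
proof -
  have ip: "iplus i \<in> I" by (rule iplus_I[OF i s n0])
  define c where "c = alpha i * alpha i"
  have c: "c > 0" using alpha_ne0[OF i s n0] not_real_square_gt_zero unfolding c_def by blast
  define g where "g = (if iminus i \<in> I then alpha (iminus i) * alpha (iminus i) else 0)"
  have g: "g \<ge> 0" by (simp add: g_def)
  have rec: "lam t * A i t = c * (A i t + A (iplus i) t) + g * (A (iminus i) t + A i t)" if "1 \<le> t" for t
    using recursion[OF i ip that] by (simp add: c_def g_def)
  show ?thesis
    unfolding Qf_def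
  proof (rule abs_key[where lam=lam and c=c and K="c + 3/2 * g" and h="\<lambda>t. g/2 * (A (iminus i) t)\<^sup>2"
        and y="A (iplus i)"])
    show "filterlim lam at_top sequentially" by (rule lim_lam)
    show "c > 0" by (rule c)
    show "\<And>t. 0 \<le> g / 2 * (A (iminus i) t)\<^sup>2" using g by simp
    have "(\<integral>\<^sup>+t. ennreal (g / 2 * (A (iminus i) t)\<^sup>2) \<partial>count_space UNIV)
        = (\<integral>\<^sup>+t. ennreal (g / 2) * ennreal ((A (iminus i) t)\<^sup>2) \<partial>count_space UNIV)"
      by (rule nn_integral_cong) (use g in \<open>simp add: ennreal_mult[symmetric]\<close>)
    also have "\<dots> = ennreal (g / 2) * (\<integral>\<^sup>+t. ennreal ((A (iminus i) t)\<^sup>2) \<partial>count_space UNIV)"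
      by (rule nn_integral_cmult) simp
    also have "\<dots> < \<infinity>" using qm by (simp add: Qf_def ennreal_mult_less_top)
    finally show "(\<integral>\<^sup>+t. ennreal (g / 2 * (A (iminus i) t)\<^sup>2) \<partial>count_space UNIV) < \<infinity>" .
    fix t :: nat assume t: "1 \<le> t"
    define x where "x = A i t"
    define y where "y = A (iplus i) t"
    define z where "z = A (iminus i) t"
    have e: "lam t * x = c * (x + y) + g * (z + x)" using rec[OF t] by (simp add: x_def y_def z_def)
    have e2: "c * (x * y) = lam t * (x * x) - c * (x * x) - g * (z * x) - g * (x * x)"
    proof -
      have "lam t * x * x = (c * (x + y) + g * (z + x)) * x" using e by simp
      then show ?thesis by (simp add: algebra_simps)
    qed
    have zx: "z * x \<le> (z * z + x * x) / 2"
    proof -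
      have "0 \<le> (z - x) * (z - x)" by simp
      then show ?thesis by (simp add: algebra_simps)
    qed
    have gzx: "g * (z * x) \<le> g * ((z * z + x * x) / 2)" by (rule mult_left_mono[OF zx g])
    show "(lam t - (c + 3 / 2 * g)) * (A i t)\<^sup>2 - g / 2 * (A (iminus i) t)\<^sup>2 \<le> c * (A i t * A (iplus i) t)"
      unfolding x_def[symmetric] y_def[symmetric] z_def[symmetric] power2_eq_square
      using e2 gzx by (simp add: algebra_simps)
  next
    show "(\<integral>\<^sup>+t. ennreal (max 0 (- (A i t * A (iplus i) t))) \<partial>count_space UNIV) < \<infinity> \<Longrightarrow>
      (\<integral>\<^sup>+t. ennreal (max 0 (A i t * A (iplus i) t)) \<partial>count_space UNIV) < \<infinity>"
      by (rule bridge[OF i ip])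
  qed
qed


lemma Q_maass0:
  assumes r: "r > 0"
  shows "Qf (r, 0)"
proof -
  define i where "i = (r, (0::int))"
  have i: "i \<in> I" using r by (simp add: i_def idxI_def)
  have ip: "iplus i \<in> I" using r by (simp add: i_def idxI_def iplus_def)
  have im: "iminus i \<in> I" using r by (simp add: i_def idxI_def iminus_def)
  have Aeq: "A (iminus i) t = A (iplus i) t" for t
  proof -
    have "C (iminus i) (ibar (iminus i)) (int t, 0) = C (iplus i) (ibar (iplus i)) (int t, 0)"
      using HB1'[OF im ip] by (simp add: i_def iminus_def iplus_def ibar_def)
    then show ?thesis by (simp add: A_def)
  qed
  have aeq: "alpha (iminus i) = alpha i" by (simp add: alpha_def i_def iminus_def)
  define c where "c = alpha i * alpha i"
  have "alpha i \<noteq> 0" using alpha_ne0[OF i] r by (simp add: i_def)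
  then have c: "c > 0" using not_real_square_gt_zero unfolding c_def by blast
  have rec2: "lam t * A i t = c * (A i t + A (iplus i) t) + c * (A (iplus i) t + A i t)" if "1 \<le> t" for t
    using recursion[OF i ip that] im aeq Aeq by (simp add: c_def)
  have "Qf i"
    unfolding Qf_def
  proof (rule abs_key[where lam=lam and c="2*c" and K="2*c" and h="\<lambda>t. 0" and y="A (iplus i)"])
    show "filterlim lam at_top sequentially" by (rule lim_lam)
    show "0 < 2 * c" using c by simp
    show "\<And>t. 0 \<le> (0::real)" by simp
    show "(\<integral>\<^sup>+t. ennreal 0 \<partial>count_space UNIV) < \<infinity>" by simp
    fix t :: nat assume t: "1 \<le> t"
    have "lam t * A i t * A i t = (c * (A i t + A (iplus i) t) + c * (A (iplus i) t + A i t)) * A i t"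
      using rec2[OF t] by simp
    then show "(lam t - 2 * c) * (A i t)\<^sup>2 - 0 \<le> 2 * c * (A i t * A (iplus i) t)"
      by (simp add: algebra_simps power2_eq_square)
  next
    show "(\<integral>\<^sup>+t. ennreal (max 0 (- (A i t * A (iplus i) t))) \<partial>count_space UNIV) < \<infinity> \<Longrightarrow>
      (\<integral>\<^sup>+t. ennreal (max 0 (A i t * A (iplus i) t)) \<partial>count_space UNIV) < \<infinity>"
      by (rule bridge[OF i ip])
  qed
  then show ?thesis by (simp add: i_def)
qed

lemma Q_00: "Qf (0,0)"
  unfolding Qf_def
proof (rule nn_split_fin[where F="{0}"])
  show "finite {0::nat}" by simp
  show "\<And>t. ennreal ((A (0,0) t)\<^sup>2) < \<infinity>" by simp
  have "(\<integral>\<^sup>+t. ennreal ((A (0,0) t)\<^sup>2) \<partial>count_space (UNIV - {0})) = (\<integral>\<^sup>+t. 0 \<partial>count_space (UNIV - {0::nat}))"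
  proof (rule nn_integral_cong)
    fix t assume "t \<in> space (count_space (UNIV - {0::nat}))"
    then have t: "t \<noteq> 0" by simp
    have "C (0,0) (ibar (0,0)) (int t, 0) = 0"
      using HB4'[OF mem_00 mem_t0[of t]] t by (simp add: ibar_def)
    then show "ennreal ((A (0,0) t)\<^sup>2) = 0" by (simp add: A_def)
  qed
  then show "(\<integral>\<^sup>+t. ennreal ((A (0,0) t)\<^sup>2) \<partial>count_space (UNIV - {0})) < \<infinity>" by simp
qed

lemma Q_nonneg: "\<forall>i. i \<in> I \<longrightarrow> snd i = int n \<longrightarrow> Qf i"
proof (induction n)
  case 0
  show ?case
  proof (intro allI impI)
    fix i assume i: "i \<in> I" and s: "snd i = int 0"
    show "Qf i"
    proof (cases "i = (0,0)")
      case True then show ?thesis using Q_00 by simp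
    next
      case False
      have "fst i > 0"
      proof (rule ccontr)
        assume "\<not> fst i > 0"
        moreover have "fst i \<ge> 0" using snd0[OF i] s by simp
        ultimately have "fst i = 0" by simp
        then show False using False s by (cases i) simp
      qed
      then show ?thesis using Q_maass0[of "fst i"] s by (cases i) simp
    qed
  qed
next
  case (Suc m)
  show ?case
  proof (intro allI impI)
    fix i assume i: "i \<in> I" and s: "snd i = int (Suc m)"
    have n0: "i \<noteq> (0,0)" using s by auto
    have qm: "Qf (iminus i)"
    proof (cases "iminus i \<in> I")
      case True
      then show ?thesis using Suc.IH s by (simp add: iminus_def)
    next
      case False
      then show ?thesis by (rule Qf_out)
    qed
    show "Qf i" using Q_general[OF i _ n0 qm] s by simp
  qed
qed

lemma Q_all: "Qf i"
proof (cases "i \<in> I")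
  case False then show ?thesis by (rule Qf_out)
next
  case True
  show ?thesis
  proof (cases "snd i \<ge> 0")
    case True2: True
    then show ?thesis using Q_nonneg[of "nat (snd i)", rule_format, of i] True by simp
  next
    case False
    then have "snd (ibar i) \<ge> 0" by (simp add: ibar_def)
    then have "Qf (ibar i)" using Q_nonneg[of "nat (snd (ibar i))", rule_format, of "ibar i"] ibar_I[OF True] by simp
    then show ?thesis by (simp add: Qf_def A_bar)
  qed
qed

end

context HBctx begin

lemma S_fin:
  assumes i: "i \<in> I" and j: "j \<in> I"
  shows "(\<integral>\<^sup>+l. ennreal ((cmod (C i j l))\<^sup>2) \<partial>count_space I) < \<infinity>"
proof (rule ccontr)
  assume inf: "\<not> ?thesis"
  define n where "n = nat \<bar>snd i + snd j\<bar>"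
  define f where "f = (\<lambda>l. (cmod (C i j l))\<^sup>2)"
  define L where "L = (\<lambda>l. (-1::complex) ^ nat \<bar>snd l\<bar> * C i j l * C (ibar i) (ibar j) (ibar l))"
  define R where "R = (\<lambda>l. (-1::complex) ^ nat \<bar>snd l\<bar> * C i (ibar i) l * C j (ibar j) (ibar l))"
  have imp: "csum_converges L I \<Longrightarrow> csum_converges R I \<Longrightarrow> csum_value L I = csum_value R I"
    using h6[unfolded HB6_weak_def Let_def, rule_format, OF i j ibar_I[OF i] ibar_I[OF j]]
    unfolding L_def R_def by blast
  have L_val: "L l = complex_of_real ((-1) ^ n * f l)" if l: "l \<in> I" for l
  proof -
    have c3: "C (ibar i) (ibar j) (ibar l) = cnj (C i j l)"
      using HB3'[OF i j l] by simp
    have sq: "C i j l * cnj (C i j l) = complex_of_real (f l)"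
      unfolding f_def by (metis complex_norm_square of_real_power)
    show ?thesis
    proof (cases "C i j l = 0")
      case True
      then show ?thesis by (simp add: L_def f_def)
    next
      case False
      then have "snd i + snd j = snd l" using HB2'[OF i j, of l] by blast
      then have "snd l = snd i + snd j" by simp
      then have "(-1::complex) ^ nat \<bar>snd l\<bar> = complex_of_real ((-1) ^ n)" by (simp add: n_def)
      then show ?thesis unfolding L_def c3 by (simp add: mult.assoc sq)
    qed
  qed
  have R_sup: "R l = 0" if "l \<in> I" "snd l \<noteq> 0" for l
    using HB2'[OF i ibar_I[OF i], of l] that by (simp add: R_def ibar_def)
  have R_on: "R (int t, 0) = complex_of_real (A i t * A j t)" for t
    by (simp add: R_def ibar_def A_real[unfolded ibar_def])
  have ImR: "Im (R l) = 0" if "l \<in> I" for l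
  proof (cases "snd l = 0")
    case True
    then have "l = (int (nat (fst l)), 0)" using snd0[OF that] by (cases l) auto
    then show ?thesis using R_on by (metis Im_complex_of_real)
  next
    case False
    then show ?thesis using R_sup[OF that] by simp
  qed
  have sqsum: "(\<integral>\<^sup>+t. ennreal ((A i t)\<^sup>2 + (A j t)\<^sup>2) \<partial>count_space UNIV) < \<infinity>"
  proof -
    have "(\<integral>\<^sup>+t. ennreal ((A i t)\<^sup>2 + (A j t)\<^sup>2) \<partial>count_space UNIV)
      = (\<integral>\<^sup>+t. ennreal ((A i t)\<^sup>2) + ennreal ((A j t)\<^sup>2) \<partial>count_space UNIV)"
      by (rule nn_integral_cong) (simp add: ennreal_plus)
    also have "\<dots> = (\<integral>\<^sup>+t. ennreal ((A i t)\<^sup>2) \<partial>count_space UNIV) + (\<integral>\<^sup>+t. ennreal ((A j t)\<^sup>2) \<partial>count_space UNIV)"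
      by (rule nn_integral_add) auto
    also have "\<dots> < \<infinity>" using Q_all[of i] Q_all[of j] by (simp add: Qf_def)
    finally show ?thesis .
  qed
  have ab: "\<bar>a * b\<bar> \<le> a\<^sup>2 + b\<^sup>2" for a b :: real
  proof -
    have "0 \<le> (\<bar>a\<bar> - \<bar>b\<bar>)\<^sup>2" by simp
    then have "2 * (\<bar>a\<bar> * \<bar>b\<bar>) \<le> a\<^sup>2 + b\<^sup>2" by (simp add: power2_eq_square algebra_simps)
    moreover have "0 \<le> \<bar>a\<bar> * \<bar>b\<bar>" by simp
    ultimately have "\<bar>a\<bar> * \<bar>b\<bar> \<le> a\<^sup>2 + b\<^sup>2" by linarith
    then show ?thesis by (simp add: abs_mult)
  qed
  have RposF: "pos_part_sum (\<lambda>l. Re (R l)) I < \<infinity>"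
  proof -
    have "pos_part_sum (\<lambda>l. Re (R l)) I = (\<integral>\<^sup>+t. ennreal (max 0 (A i t * A j t)) \<partial>count_space UNIV)"
      unfolding pos_part_sum_def by (subst supp0) (auto simp: R_sup R_on)
    also have "\<dots> \<le> (\<integral>\<^sup>+t. ennreal ((A i t)\<^sup>2 + (A j t)\<^sup>2) \<partial>count_space UNIV)"
    proof (rule nn_mono_on)
      fix t
      have "\<bar>A i t * A j t\<bar> \<le> (A i t)\<^sup>2 + (A j t)\<^sup>2" by (rule ab)
      then show "ennreal (max 0 (A i t * A j t)) \<le> ennreal ((A i t)\<^sup>2 + (A j t)\<^sup>2)"
        by (intro ennreal_leI) (simp add: abs_le_iff)
    qed
    finally show ?thesis using sqsum by (rule le_less_trans)
  qed
  have RnegF: "neg_part_sum (\<lambda>l. Re (R l)) I < \<infinity>"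
  proof -
    have "neg_part_sum (\<lambda>l. Re (R l)) I = (\<integral>\<^sup>+t. ennreal (max 0 (- (A i t * A j t))) \<partial>count_space UNIV)"
      unfolding neg_part_sum_def by (subst supp0) (auto simp: R_sup R_on)
    also have "\<dots> \<le> (\<integral>\<^sup>+t. ennreal ((A i t)\<^sup>2 + (A j t)\<^sup>2) \<partial>count_space UNIV)"
    proof (rule nn_mono_on)
      fix t
      have "\<bar>A i t * A j t\<bar> \<le> (A i t)\<^sup>2 + (A j t)\<^sup>2" by (rule ab)
      then show "ennreal (max 0 (- (A i t * A j t))) \<le> ennreal ((A i t)\<^sup>2 + (A j t)\<^sup>2)"
        by (intro ennreal_leI) (simp add: abs_le_iff)
    qed
    finally show ?thesis using sqsum by (rule le_less_trans)
  qed
  have q1: "pos_part_sum (\<lambda>l. Im (R l)) I = 0"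
    by (rule pos_part_zero) (use ImR in simp)
  have q2: "pos_part_sum (\<lambda>l. Im (L l)) I = 0"
    by (rule pos_part_zero) (use L_val in simp)
  have cR: "csum_converges R I"
    unfolding csum_converges_def ereal_sum_converges_def q1 using RposF by simp
  have fnn: "f l \<ge> 0" for l by (simp add: f_def)
  have fI: "(\<integral>\<^sup>+l. ennreal (f l) \<partial>count_space I) = \<infinity>"
    using inf by (simp add: f_def not_less top_unique)
  have Rfin: "\<bar>ereal_sum_value (\<lambda>l. Re (R l)) I\<bar> \<noteq> \<infinity>"
  proof -
    obtain p where p: "pos_part_sum (\<lambda>l. Re (R l)) I = ennreal p" "p \<ge> 0"
      using RposF by (cases "pos_part_sum (\<lambda>l. Re (R l)) I" rule: ennreal_cases) auto
    obtain q where q: "neg_part_sum (\<lambda>l. Re (R l)) I = ennreal q" "q \<ge> 0"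
      using RnegF by (cases "neg_part_sum (\<lambda>l. Re (R l)) I" rule: ennreal_cases) auto
    show ?thesis unfolding ereal_sum_value_def p q using p(2) q(2) by simp
  qed
  show False
  proof (cases "even n")
    case True
    then have Lr: "Re (L l) = f l" if "l \<in> I" for l using L_val[OF that] by simp
    have negz: "neg_part_sum (\<lambda>l. Re (L l)) I = 0"
      by (rule neg_part_zero) (simp add: Lr fnn)
    have posI: "pos_part_sum (\<lambda>l. Re (L l)) I = \<infinity>"
    proof -
      have "pos_part_sum (\<lambda>l. Re (L l)) I = (\<integral>\<^sup>+l. ennreal (f l) \<partial>count_space I)"
        unfolding pos_part_sum_def by (rule nn_integral_cong) (simp add: Lr fnn)
      then show ?thesis using fI by simp
    qed
    have cL: "csum_converges L I"
      unfolding csum_converges_def ereal_sum_converges_def q2 negz by simp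
    have eq: "ereal_sum_value (\<lambda>l. Re (L l)) I = ereal_sum_value (\<lambda>l. Re (R l)) I"
      using arg_cong[OF imp[OF cL cR], of fst] unfolding csum_value_def by (simp only: fst_conv)
    have "ereal_sum_value (\<lambda>l. Re (L l)) I = \<infinity>"
      unfolding ereal_sum_value_def posI negz by (simp add: zero_ennreal.rep_eq)
    then show False using eq Rfin by simp
  next
    case False
    then have Lr: "Re (L l) = - f l" if "l \<in> I" for l using L_val[OF that] by simp
    have posz: "pos_part_sum (\<lambda>l. Re (L l)) I = 0"
      by (rule pos_part_zero) (simp add: Lr fnn)
    have negI: "neg_part_sum (\<lambda>l. Re (L l)) I = \<infinity>"
    proof -
      have "neg_part_sum (\<lambda>l. Re (L l)) I = (\<integral>\<^sup>+l. ennreal (f l) \<partial>count_space I)"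
        unfolding neg_part_sum_def by (rule nn_integral_cong) (simp add: Lr fnn)
      then show ?thesis using fI by simp
    qed
    have cL: "csum_converges L I"
      unfolding csum_converges_def ereal_sum_converges_def q2 posz by simp
    have eq: "ereal_sum_value (\<lambda>l. Re (L l)) I = ereal_sum_value (\<lambda>l. Re (R l)) I"
      using arg_cong[OF imp[OF cL cR], of fst] unfolding csum_value_def by (simp only: fst_conv)
    have "ereal_sum_value (\<lambda>l. Re (L l)) I = - \<infinity>"
      unfolding ereal_sum_value_def posz negI by (simp add: zero_ennreal.rep_eq)
    then show False using eq Rfin by simp
  qed
qed


definition W :: "nat \<Rightarrow> int \<times> int \<Rightarrow> int \<times> int \<Rightarrow> ennreal" where
  "W N i j = (\<integral>\<^sup>+t. ennreal (lam t ^ N * (cmod (C i j (int t, snd i + snd j)))\<^sup>2) \<partial>count_space UNIV)"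

lemma W_out: "i \<notin> I \<or> j \<notin> I \<Longrightarrow> W N i j = 0"
proof -
  assume a: "i \<notin> I \<or> j \<notin> I"
  then have "\<And>l. C i j l = 0" using C_out by blast
  then show ?thesis by (simp add: W_def)
qed

lemma step_ineq:
  assumes i: "i \<in> I" and j: "j \<in> I" and t: "1 \<le> t"
  shows "lam t ^ Suc N * (cmod (C i j (int t, snd i + snd j)))\<^sup>2
    \<le> 2 * (alpha i)\<^sup>2 * (lam t ^ N * (cmod (C (iplus i) j (int t, snd (iplus i) + snd j)))\<^sup>2)
     + 2 * (alpha j)\<^sup>2 * (lam t ^ N * (cmod (C i (iplus j) (int t, snd i + snd (iplus j))))\<^sup>2)"
proof -
  define w where "w = snd i + snd j"
  define u where "u = sqrt (lam t + real_of_int ((w + 1) * w))"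
  define p where "p = cmod (C i j (int t, w))"
  define p1 where "p1 = cmod (C (iplus i) j (int t, w + 1))"
  define p2 where "p2 = cmod (C i (iplus j) (int t, w + 1))"
  note e = HB5'[OF i j mem_pos[OF t, of "w + 1"]]
  have e': "complex_of_real u * C i j (int t, w)
     = complex_of_real (alpha i) * C (iplus i) j (int t, w + 1) + complex_of_real (alpha j) * C i (iplus j) (int t, w + 1)"
    using e by (simp add: iminus_def u_def alpha_def)
  have ww: "real_of_int ((w + 1) * w) \<ge> 0"
  proof -
    have "(w + 1) * w \<ge> 0" by (cases "w \<ge> 0") (simp_all add: mult_nonpos_nonpos)
    then show ?thesis by (simp only: of_int_0_le_iff)
  qed
  have arg: "0 \<le> lam t + real_of_int ((w + 1) * w)" using ww lam_nonneg[of t] by linarith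
  have u2: "u\<^sup>2 = lam t + real_of_int ((w + 1) * w)"
    unfolding u_def by (rule real_sqrt_pow2[OF arg])
  have u0: "u \<ge> 0" unfolding u_def by (rule real_sqrt_ge_zero[OF arg])
  have "u * p = cmod (complex_of_real u * C i j (int t, w))"
    using u0 by (simp add: p_def norm_mult)
  also have "\<dots> \<le> \<bar>alpha i\<bar> * p1 + \<bar>alpha j\<bar> * p2"
    unfolding e' p1_def p2_def by (rule order.trans[OF norm_triangle_ineq]) (simp add: norm_mult)
  finally have up: "u * p \<le> \<bar>alpha i\<bar> * p1 + \<bar>alpha j\<bar> * p2" .
  have "lam t * p\<^sup>2 \<le> u\<^sup>2 * p\<^sup>2"
    using u2 ww by (intro mult_right_mono) auto
  also have "\<dots> = (u * p)\<^sup>2" by (simp add: power_mult_distrib)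
  also have "\<dots> \<le> (\<bar>alpha i\<bar> * p1 + \<bar>alpha j\<bar> * p2)\<^sup>2"
    using up u0 by (intro power_mono) (auto simp: p_def)
  also have "\<dots> \<le> 2 * (alpha i)\<^sup>2 * p1\<^sup>2 + 2 * (alpha j)\<^sup>2 * p2\<^sup>2"
  proof -
    have "0 \<le> (\<bar>alpha i\<bar> * p1 - \<bar>alpha j\<bar> * p2)\<^sup>2" by simp
    then show ?thesis by (simp add: power2_eq_square algebra_simps)
  qed
  finally have main: "lam t * p\<^sup>2 \<le> 2 * (alpha i)\<^sup>2 * p1\<^sup>2 + 2 * (alpha j)\<^sup>2 * p2\<^sup>2" .
  have "lam t ^ Suc N * p\<^sup>2 = lam t ^ N * (lam t * p\<^sup>2)" by simp
  also have "\<dots> \<le> lam t ^ N * (2 * (alpha i)\<^sup>2 * p1\<^sup>2 + 2 * (alpha j)\<^sup>2 * p2\<^sup>2)"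
    using main lam_nonneg[of t] by (intro mult_left_mono) auto
  finally show ?thesis
    by (simp add: p_def p1_def p2_def w_def iplus_def algebra_simps)
qed

lemma W_fin: "W N i j < \<infinity>"
proof (induction N arbitrary: i j)
  case 0
  show ?case
  proof (cases "i \<in> I \<and> j \<in> I")
    case False then show ?thesis using W_out by auto
  next
    case True
    let ?g = "\<lambda>t::nat. (int t, snd i + snd j)"
    have "W 0 i j = (\<integral>\<^sup>+t. ennreal ((cmod (C i j (?g t)))\<^sup>2) \<partial>count_space UNIV)"
      by (simp add: W_def)
    also have "\<dots> = (\<integral>\<^sup>+l. ennreal ((cmod (C i j l))\<^sup>2) \<partial>count_space (range ?g))"
      by (rule nn_reindex[symmetric]) (simp add: inj_on_def)
    also have "\<dots> \<le> (\<integral>\<^sup>+l. ennreal ((cmod (C i j l))\<^sup>2) \<partial>count_space I)"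
      by (rule nn_le_support) (simp add: C_out)
    also have "\<dots> < \<infinity>" using S_fin True by blast
    finally show ?thesis .
  qed
next
  case (Suc N)
  show ?case
  proof (cases "i \<in> I \<and> j \<in> I")
    case False then show ?thesis using W_out by auto
  next
    case True
    have "W (Suc N) i j \<le> (\<integral>\<^sup>+t. ennreal (2 * (alpha i)\<^sup>2) * ennreal (lam t ^ N * (cmod (C (iplus i) j (int t, snd (iplus i) + snd j)))\<^sup>2)
        + ennreal (2 * (alpha j)\<^sup>2) * ennreal (lam t ^ N * (cmod (C i (iplus j) (int t, snd i + snd (iplus j))))\<^sup>2) \<partial>count_space UNIV)"
      unfolding W_def
    proof (rule nn_mono_on)
      fix t :: nat
      show "ennreal (lam t ^ Suc N * (cmod (C i j (int t, snd i + snd j)))\<^sup>2)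
        \<le> ennreal (2 * (alpha i)\<^sup>2) * ennreal (lam t ^ N * (cmod (C (iplus i) j (int t, snd (iplus i) + snd j)))\<^sup>2)
        + ennreal (2 * (alpha j)\<^sup>2) * ennreal (lam t ^ N * (cmod (C i (iplus j) (int t, snd i + snd (iplus j))))\<^sup>2)"
      proof (cases "t = 0")
        case True
        have "lam 0 = 0" using cs unfolding candidate_spectrum_def by simp
        then show ?thesis using True by simp
      next
        case False
        then have t: "1 \<le> t" by simp
        have ln: "0 \<le> lam t ^ N" using lam_nonneg by simp
        have "ennreal (lam t ^ Suc N * (cmod (C i j (int t, snd i + snd j)))\<^sup>2)
          \<le> ennreal (2 * (alpha i)\<^sup>2 * (lam t ^ N * (cmod (C (iplus i) j (int t, snd (iplus i) + snd j)))\<^sup>2)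
             + 2 * (alpha j)\<^sup>2 * (lam t ^ N * (cmod (C i (iplus j) (int t, snd i + snd (iplus j))))\<^sup>2))"
          by (rule ennreal_leI) (rule step_ineq[OF _ _ t]; use True in blast)
        also have "\<dots> = ennreal (2 * (alpha i)\<^sup>2) * ennreal (lam t ^ N * (cmod (C (iplus i) j (int t, snd (iplus i) + snd j)))\<^sup>2)
        + ennreal (2 * (alpha j)\<^sup>2) * ennreal (lam t ^ N * (cmod (C i (iplus j) (int t, snd i + snd (iplus j))))\<^sup>2)"
          using ln by (simp add: ennreal_plus ennreal_mult)
        finally show ?thesis .
      qed
    qed
    also have "\<dots> = ennreal (2 * (alpha i)\<^sup>2) * W N (iplus i) j + ennreal (2 * (alpha j)\<^sup>2) * W N i (iplus j)"
      unfolding W_def by (simp add: nn_integral_add nn_integral_cmult)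
    also have "\<dots> < \<infinity>" using Suc.IH[of "iplus i" j] Suc.IH[of i "iplus j"]
      by (simp add: ennreal_mult_less_top)
    finally show ?thesis .
  qed
qed


lemma final:
  assumes i: "i \<in> I" and j: "j \<in> I"
  shows "(\<lambda>l. \<bar>lamZ lam k (fst l)\<bar> ^ N * (cmod (C i j l))\<^sup>2) summable_on I"
proof (rule nn_fin_summable)
  define w where "w = snd i + snd j"
  define f where "f = (\<lambda>l. \<bar>lamZ lam k (fst l)\<bar> ^ N * (cmod (C i j l))\<^sup>2)"
  let ?g = "\<lambda>t::nat. (int t, w)"
  show "\<And>x. x \<in> I \<Longrightarrow> 0 \<le> \<bar>lamZ lam k (fst x)\<bar> ^ N * (cmod (C i j x))\<^sup>2" by simp
  have "filterlim k at_top sequentially" using cs unfolding candidate_spectrum_def by blast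
  then have "eventually (\<lambda>r. nat \<bar>w\<bar> + 1 \<le> k r) sequentially" by (simp add: filterlim_at_top)
  then obtain R0 where R0: "\<And>r. r \<ge> R0 \<Longrightarrow> nat \<bar>w\<bar> + 1 \<le> k r" by (auto simp: eventually_sequentially)
  define F where "F = {l \<in> I. snd l = w \<and> fst l \<le> 0}"
  have finF: "finite F"
  proof (rule finite_subset)
    show "F \<subseteq> {- int R0..0} \<times> {w}"
    proof
      fix l assume l: "l \<in> F"
      then have lI: "l \<in> I" and sl: "snd l = w" and fl: "fst l \<le> 0" by (auto simp: F_def)
      have "- int R0 \<le> fst l"
      proof (cases "fst l = 0")
        case True then show ?thesis by simp
      next
        case False
        then have neg: "fst l < 0" using fl by simp
        then have "int (k (nat (- fst l))) \<le> \<bar>w\<bar>" using lI sl by (cases l) (auto simp: idxI_def)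
        then have "k (nat (- fst l)) \<le> nat \<bar>w\<bar>" by linarith
        then have "\<not> nat (- fst l) \<ge> R0" using R0 by fastforce
        then show ?thesis by linarith
      qed
      then show "l \<in> {- int R0..0} \<times> {w}" using sl fl by (cases l) auto
    qed
    show "finite ({- int R0..0} \<times> {w})" by simp
  qed
  have fin: "(\<integral>\<^sup>+l. ennreal (f l) \<partial>count_space I) < \<infinity>"
  proof (rule nn_split_fin[OF finF])
    show "\<And>x. ennreal (f x) < \<infinity>" by simp
    have "(\<integral>\<^sup>+l. ennreal (f l) \<partial>count_space (I - F)) \<le> (\<integral>\<^sup>+l. ennreal (f l) \<partial>count_space (range ?g))"
    proof (rule nn_le_support)
      fix l assume l: "l \<in> I - F" "l \<notin> range ?g"
      show "ennreal (f l) = 0"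
      proof (cases "snd l = w")
        case False
        then have "C i j l = 0" using HB2'[OF i j] by (auto simp: w_def)
        then show ?thesis by (simp add: f_def)
      next
        case True
        then have "fst l > 0" using l(1) by (auto simp: F_def)
        then have "l = ?g (nat (fst l))" using True by (cases l) auto
        then show ?thesis using l(2) by blast
      qed
    qed
    also have "\<dots> = (\<integral>\<^sup>+t. ennreal (f (?g t)) \<partial>count_space UNIV)"
      by (rule nn_reindex) (simp add: inj_on_def)
    also have "\<dots> = W N i j"
      unfolding W_def f_def w_def using lam_nonneg by simp
    also have "\<dots> < \<infinity>" by (rule W_fin)
    finally show "(\<integral>\<^sup>+l. ennreal (f l) \<partial>count_space (I - F)) < \<infinity>" .
  qed
  then show "(\<integral>\<^sup>+l. ennreal (\<bar>lamZ lam k (fst l)\<bar> ^ N * (cmod (C i j l))\<^sup>2) \<partial>count_space I) < \<infinity>"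
    by (simp add: f_def)
qed

end

theorem proposition5p2:
  fixes lam :: "nat \<Rightarrow> real" and k :: "nat \<Rightarrow> nat"
    and C :: "int \<times> int \<Rightarrow> int \<times> int \<Rightarrow> int \<times> int \<Rightarrow> complex"
  assumes "candidate_spectrum lam k C"
    and "HB1 k C" and "HB2 k C" and "HB3 k C" and "HB4 k C" and "HB5 lam k C"
    and "HB6_weak k C"
    and "i \<in> idxI k" and "j \<in> idxI k"
  shows "(\<lambda>l. \<bar>lamZ lam k (fst l)\<bar> ^ N * (cmod (C i j l))\<^sup>2) summable_on idxI k"
proof -
  interpret HBctx lam k C
    by (rule HBctx.intro) (use assms in blast)+
  show ?thesis by (rule final[OF assms(8,9)])
qed

end
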